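(* Let $\mathbb E$ be a finitely complete category such that, for every object $X$, every internal group in $Pt_X\mathbb E$ has as underlying split epimorphism an isomorphism. Then for every object $X$, every internal reflexive graph on $X$ that admits an internal groupoid structure is a relation on $X$, i.e. it is a subobject of the indiscrete relation $\nabla_X$ in $RGh_X\mathbb E$ (equivalently $(d_0,d_1):X_1\to X\times X$ is a monomorphism).
   Context: $Pt_X\mathbb E$ is the category of split epimorphisms $f:A\to X$ with chosen section $s$, morphisms commuting with $f$ and $s$. An internal reflexive graph on $X$ is $d_0,d_1:X_1\to X$ with $s_0:X\to X_1$, $d_0s_0=1=d_1s_0$; $RGh_X\mathbb E$ is the category of these with morphisms identity on $X$, having terminal object $\nabla_X=(X\times X,p_0,p_1,(1,1))$. An internal groupoid structure on such a graph is an associative unital composition on $X_1\times_XX_1$ with identities $s_0$ and inverses. *)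

theory Defs
  imports Main
begin

text \<open>A category given by its objects, arrows, domain/codomain maps,
  composition (cmp C g f = g after f) and identities.\<close>

record ('o, 'm) cat =
  Obj :: "'o set"
  Arr :: "'m set"
  dom :: "'m \<Rightarrow> 'o"
  cod :: "'m \<Rightarrow> 'o"
  cmp :: "'m \<Rightarrow> 'm \<Rightarrow> 'm"
  idt :: "'o \<Rightarrow> 'm"

definition hom :: "('o, 'm) cat \<Rightarrow> 'm \<Rightarrow> 'o \<Rightarrow> 'o \<Rightarrow> bool" where
  "hom C f a b \<longleftrightarrow> f \<in> Arr C \<and> dom C f = a \<and> cod C f = b"

definition category :: "('o, 'm) cat \<Rightarrow> bool" where
  "category C \<longleftrightarrow>
     (\<forall>f \<in> Arr C. dom C f \<in> Obj C \<and> cod C f \<in> Obj C)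
   \<and> (\<forall>a \<in> Obj C. hom C (idt C a) a a)
   \<and> (\<forall>f g a b c. hom C f a b \<longrightarrow> hom C g b c \<longrightarrow> hom C (cmp C g f) a c)
   \<and> (\<forall>f a b. hom C f a b \<longrightarrow> cmp C (idt C b) f = f \<and> cmp C f (idt C a) = f)
   \<and> (\<forall>f g h a b c d. hom C f a b \<longrightarrow> hom C g b c \<longrightarrow> hom C h c d \<longrightarrow>
        cmp C h (cmp C g f) = cmp C (cmp C h g) f)"

definition is_iso :: "('o, 'm) cat \<Rightarrow> 'm \<Rightarrow> bool" where
  "is_iso C f \<longleftrightarrow> f \<in> Arr C \<and> (\<exists>g. hom C g (cod C f) (dom C f)
      \<and> cmp C g f = idt C (dom C f) \<and> cmp C f g = idt C (cod C f))"

definition is_mono :: "('o, 'm) cat \<Rightarrow> 'm \<Rightarrow> bool" where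
  "is_mono C f \<longleftrightarrow> f \<in> Arr C \<and> (\<forall>T a b. hom C a T (dom C f) \<longrightarrow> hom C b T (dom C f) \<longrightarrow>
      cmp C f a = cmp C f b \<longrightarrow> a = b)"

definition is_terminal :: "('o, 'm) cat \<Rightarrow> 'o \<Rightarrow> bool" where
  "is_terminal C t \<longleftrightarrow> t \<in> Obj C \<and> (\<forall>a \<in> Obj C. \<exists>!u. hom C u a t)"

definition is_pullback :: "('o, 'm) cat \<Rightarrow> 'm \<Rightarrow> 'm \<Rightarrow> 'o \<Rightarrow> 'm \<Rightarrow> 'm \<Rightarrow> bool" where
  "is_pullback C f g P p q \<longleftrightarrow>
     f \<in> Arr C \<and> g \<in> Arr C \<and> cod C f = cod C g
   \<and> hom C p P (dom C f) \<and> hom C q P (dom C g) \<and> cmp C f p = cmp C g q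
   \<and> (\<forall>T a b. hom C a T (dom C f) \<longrightarrow> hom C b T (dom C g) \<longrightarrow> cmp C f a = cmp C g b \<longrightarrow>
        (\<exists>!u. hom C u T P \<and> cmp C p u = a \<and> cmp C q u = b))"

definition is_product :: "('o, 'm) cat \<Rightarrow> 'o \<Rightarrow> 'o \<Rightarrow> 'o \<Rightarrow> 'm \<Rightarrow> 'm \<Rightarrow> bool" where
  "is_product C a b P p q \<longleftrightarrow>
     hom C p P a \<and> hom C q P b
   \<and> (\<forall>T x y. hom C x T a \<longrightarrow> hom C y T b \<longrightarrow>
        (\<exists>!u. hom C u T P \<and> cmp C p u = x \<and> cmp C q u = y))"

text \<open>Finitely complete: a terminal object and all pullbacks (equivalent to all finite limits).\<close>
definition finitely_complete :: "('o, 'm) cat \<Rightarrow> bool" where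
  "finitely_complete C \<longleftrightarrow> category C
   \<and> (\<exists>t. is_terminal C t)
   \<and> (\<forall>f g. f \<in> Arr C \<longrightarrow> g \<in> Arr C \<longrightarrow> cod C f = cod C g \<longrightarrow>
        (\<exists>P p q. is_pullback C f g P p q))"

text \<open>Object (A, f, s) of Pt_X: split epimorphism f : A \<rightarrow> X with section s.\<close>
definition is_point :: "('o, 'm) cat \<Rightarrow> 'o \<Rightarrow> 'o \<Rightarrow> 'm \<Rightarrow> 'm \<Rightarrow> bool" where
  "is_point C X A f s \<longleftrightarrow> hom C f A X \<and> hom C s X A \<and> cmp C f s = idt C X"

text \<open>The product of (A,f,s) with itself
 in Pt_X is the pullback (P, p, q) of f along f (with section induced by (s,s)); the terminal
 object of Pt_X is (X, 1, 1), so the unit is necessarily s.  The multiplication m : P \<rightarrow> A and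
 the inverse i : A \<rightarrow> A are morphisms of Pt_X, and the group axioms (equalities of morphisms
 out of finite products) are stated on generalised elements T \<rightarrow> A.\<close>
definition internal_group_in_Pt ::
  "('o, 'm) cat \<Rightarrow> 'o \<Rightarrow> 'o \<Rightarrow> 'm \<Rightarrow> 'm \<Rightarrow> 'o \<Rightarrow> 'm \<Rightarrow> 'm \<Rightarrow> 'm \<Rightarrow> 'm \<Rightarrow> bool" where
  "internal_group_in_Pt C X A f s P p q m i \<longleftrightarrow>
     is_point C X A f s \<and> is_pullback C f f P p q
   \<comment> \<open>m is a morphism in Pt_X\<close>
   \<and> hom C m P A \<and> cmp C f m = cmp C f p
   \<and> (\<forall>u. hom C u X P \<longrightarrow> cmp C p u = s \<longrightarrow> cmp C q u = s \<longrightarrow> cmp C m u = s)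
   \<comment> \<open>i is a morphism in Pt_X\<close>
   \<and> hom C i A A \<and> cmp C f i = f \<and> cmp C i s = s
   \<comment> \<open>associativity\<close>
   \<and> (\<forall>T a b c u1 u2 u3 u4.
        hom C a T A \<longrightarrow> hom C b T A \<longrightarrow> hom C c T A \<longrightarrow>
        cmp C f a = cmp C f b \<longrightarrow> cmp C f b = cmp C f c \<longrightarrow>
        hom C u1 T P \<longrightarrow> cmp C p u1 = a \<longrightarrow> cmp C q u1 = b \<longrightarrow>
        hom C u2 T P \<longrightarrow> cmp C p u2 = cmp C m u1 \<longrightarrow> cmp C q u2 = c \<longrightarrow>
        hom C u3 T P \<longrightarrow> cmp C p u3 = b \<longrightarrow> cmp C q u3 = c \<longrightarrow>
        hom C u4 T P \<longrightarrow> cmp C p u4 = a \<longrightarrow> cmp C q u4 = cmp C m u3 \<longrightarrow>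
        cmp C m u2 = cmp C m u4)
   \<comment> \<open>unit laws (unit is s)\<close>
   \<and> (\<forall>T a u. hom C a T A \<longrightarrow> hom C u T P \<longrightarrow>
        cmp C p u = cmp C s (cmp C f a) \<longrightarrow> cmp C q u = a \<longrightarrow> cmp C m u = a)
   \<and> (\<forall>T a u. hom C a T A \<longrightarrow> hom C u T P \<longrightarrow>
        cmp C p u = a \<longrightarrow> cmp C q u = cmp C s (cmp C f a) \<longrightarrow> cmp C m u = a)
   \<comment> \<open>inverse laws\<close>
   \<and> (\<forall>T a u. hom C a T A \<longrightarrow> hom C u T P \<longrightarrow>
        cmp C p u = cmp C i a \<longrightarrow> cmp C q u = a \<longrightarrow> cmp C m u = cmp C s (cmp C f a))
   \<and> (\<forall>T a u. hom C a T A \<longrightarrow> hom C u T P \<longrightarrow>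
        cmp C p u = a \<longrightarrow> cmp C q u = cmp C i a \<longrightarrow> cmp C m u = cmp C s (cmp C f a))"

definition refl_graph :: "('o, 'm) cat \<Rightarrow> 'o \<Rightarrow> 'o \<Rightarrow> 'm \<Rightarrow> 'm \<Rightarrow> 'm \<Rightarrow> bool" where
  "refl_graph C X X1 d0 d1 s0 \<longleftrightarrow> hom C d0 X1 X \<and> hom C d1 X1 X \<and> hom C s0 X X1
     \<and> cmp C d0 s0 = idt C X \<and> cmp C d1 s0 = idt C X"

text \<open>Internal groupoid structure.  d0 = domain, d1 = codomain.  X1 \<times>_X X1 is the pullback
 (P, p, q) with d0 p = d1 q: a generalised element (g, h) of P is a composable pair, g after h,
 and c : P \<rightarrow> X1 is the composition, with identities s0 and inverse map i.\<close>
definition groupoid_structure ::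
  "('o, 'm) cat \<Rightarrow> 'o \<Rightarrow> 'o \<Rightarrow> 'm \<Rightarrow> 'm \<Rightarrow> 'm \<Rightarrow> 'o \<Rightarrow> 'm \<Rightarrow> 'm \<Rightarrow> 'm \<Rightarrow> 'm \<Rightarrow> bool" where
  "groupoid_structure C X X1 d0 d1 s0 P p q c i \<longleftrightarrow>
     refl_graph C X X1 d0 d1 s0 \<and> is_pullback C d0 d1 P p q
   \<and> hom C c P X1 \<and> cmp C d0 c = cmp C d0 q \<and> cmp C d1 c = cmp C d1 p
   \<comment> \<open>associativity: (g h) k = g (h k)\<close>
   \<and> (\<forall>T g h k u1 u2 u3 u4.
        hom C g T X1 \<longrightarrow> hom C h T X1 \<longrightarrow> hom C k T X1 \<longrightarrow>
        cmp C d0 g = cmp C d1 h \<longrightarrow> cmp C d0 h = cmp C d1 k \<longrightarrow>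
        hom C u1 T P \<longrightarrow> cmp C p u1 = g \<longrightarrow> cmp C q u1 = h \<longrightarrow>
        hom C u2 T P \<longrightarrow> cmp C p u2 = cmp C c u1 \<longrightarrow> cmp C q u2 = k \<longrightarrow>
        hom C u3 T P \<longrightarrow> cmp C p u3 = h \<longrightarrow> cmp C q u3 = k \<longrightarrow>
        hom C u4 T P \<longrightarrow> cmp C p u4 = g \<longrightarrow> cmp C q u4 = cmp C c u3 \<longrightarrow>
        cmp C c u2 = cmp C c u4)
   \<comment> \<open>identities s0\<close>
   \<and> (\<forall>T g u. hom C g T X1 \<longrightarrow> hom C u T P \<longrightarrow>
        cmp C p u = cmp C s0 (cmp C d1 g) \<longrightarrow> cmp C q u = g \<longrightarrow> cmp C c u = g)
   \<and> (\<forall>T g u. hom C g T X1 \<longrightarrow> hom C u T P \<longrightarrow>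
        cmp C p u = g \<longrightarrow> cmp C q u = cmp C s0 (cmp C d0 g) \<longrightarrow> cmp C c u = g)
   \<comment> \<open>inverses\<close>
   \<and> hom C i X1 X1 \<and> cmp C d0 i = d1 \<and> cmp C d1 i = d0
   \<and> (\<forall>T g u. hom C g T X1 \<longrightarrow> hom C u T P \<longrightarrow>
        cmp C p u = cmp C i g \<longrightarrow> cmp C q u = g \<longrightarrow> cmp C c u = cmp C s0 (cmp C d0 g))
   \<and> (\<forall>T g u. hom C g T X1 \<longrightarrow> hom C u T P \<longrightarrow>
        cmp C p u = g \<longrightarrow> cmp C q u = cmp C i g \<longrightarrow> cmp C c u = cmp C s0 (cmp C d1 g))"

definition admits_groupoid_structure :: "('o, 'm) cat \<Rightarrow> 'o \<Rightarrow> 'o \<Rightarrow> 'm \<Rightarrow> 'm \<Rightarrow> 'm \<Rightarrow> bool" where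
  "admits_groupoid_structure C X X1 d0 d1 s0 \<longleftrightarrow>
     (\<exists>P p q c i. groupoid_structure C X X1 d0 d1 s0 P p q c i)"

end

theory Submission
  imports Defs
begin

locale cctx =
  fixes C :: "('o,'m) cat"
  assumes cat: "category C"
begin

abbreviation cp (infixr "\<cdot>" 55) where "g \<cdot> f \<equiv> cmp C g f"

lemma comp_hom: "hom C f a b \<Longrightarrow> hom C g b c \<Longrightarrow> hom C (g \<cdot> f) a c"
  using cat unfolding category_def by blast

lemma assoc: "hom C f a b \<Longrightarrow> hom C g b c \<Longrightarrow> hom C h c d \<Longrightarrow> h \<cdot> (g \<cdot> f) = (h \<cdot> g) \<cdot> f"
  using cat unfolding category_def by blast

lemma idl: "hom C f a b \<Longrightarrow> idt C b \<cdot> f = f"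
  using cat unfolding category_def by blast
lemma idr: "hom C f a b \<Longrightarrow> f \<cdot> idt C a = f"
  using cat unfolding category_def by blast
lemma id_hom: "a \<in> Obj C \<Longrightarrow> hom C (idt C a) a a"
  using cat unfolding category_def by blast

lemma push: "g \<cdot> f = h \<Longrightarrow> hom C x T a \<Longrightarrow> hom C f a b \<Longrightarrow> hom C g b c \<Longrightarrow> g \<cdot> (f \<cdot> x) = h \<cdot> x"
  using assoc by metis

lemma pb_hom: "is_pullback C f g P p q \<Longrightarrow> hom C f A X \<Longrightarrow> hom C g B X \<Longrightarrow> hom C p P A \<and> hom C q P B \<and> f \<cdot> p = g \<cdot> q"
  unfolding is_pullback_def hom_def by auto

lemma pb_ex: "is_pullback C f g P p q \<Longrightarrow> hom C a T A \<Longrightarrow> hom C f A X \<Longrightarrow> hom C b T B \<Longrightarrow> hom C g B X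
   \<Longrightarrow> f \<cdot> a = g \<cdot> b \<Longrightarrow> \<exists>u. hom C u T P \<and> p \<cdot> u = a \<and> q \<cdot> u = b"
  unfolding is_pullback_def hom_def by (elim conjE) (metis (no_types, lifting))

lemma pb_uniq:
  assumes pb: "is_pullback C f g P p q" and f: "hom C f A X" and g: "hom C g B X"
    and u: "hom C u T P" and v: "hom C v T P" and "p \<cdot> u = p \<cdot> v" "q \<cdot> u = q \<cdot> v"
  shows "u = v"
proof -
  have hp: "hom C p P A" and hq: "hom C q P B" and fpq: "f \<cdot> p = g \<cdot> q" using pb_hom[OF pb f g] by auto
  have ha: "hom C (p \<cdot> u) T A" and hb: "hom C (q \<cdot> u) T B" using comp_hom hp hq u by blast+
  have "f \<cdot> (p \<cdot> u) = g \<cdot> (q \<cdot> u)" using push[OF fpq u hp f] push[OF refl u hq g] by simp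
  moreover have "\<forall>T a b. hom C a T (dom C f) \<longrightarrow> hom C b T (dom C g) \<longrightarrow> f \<cdot> a = g \<cdot> b \<longrightarrow>
        (\<exists>!u. hom C u T P \<and> p \<cdot> u = a \<and> q \<cdot> u = b)" using pb unfolding is_pullback_def by blast
  moreover have "dom C f = A" "dom C g = B" using f g unfolding hom_def by auto
  ultimately have "\<exists>!w. hom C w T P \<and> p \<cdot> w = p \<cdot> u \<and> q \<cdot> w = q \<cdot> u"
    using ha hb by auto
  then show ?thesis using u v assms(6,7) by metis
qed

lemma prod_uniq:
  assumes pr: "is_product C a b P p q"
    and u: "hom C u T P" and v: "hom C v T P" and "p \<cdot> u = p \<cdot> v" "q \<cdot> u = q \<cdot> v"
  shows "u = v"
proof -
  have hp: "hom C p P a" and hq: "hom C q P b" using pr unfolding is_product_def by auto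
  have ha: "hom C (p \<cdot> u) T a" and hb: "hom C (q \<cdot> u) T b" using comp_hom hp hq u by blast+
  then have "\<exists>!w. hom C w T P \<and> p \<cdot> w = p \<cdot> u \<and> q \<cdot> w = q \<cdot> u"
    using pr unfolding is_product_def by auto
  then show ?thesis using u v assms(4,5) by metis
qed

lemma main:
  assumes fc: "finitely_complete C"
    and grp: "\<And>X A f s P p q m i. X \<in> Obj C \<Longrightarrow>
                internal_group_in_Pt C X A f s P p q m i \<Longrightarrow> is_iso C f"
    and X: "X \<in> Obj C"
    and G: "refl_graph C X X1 d0 d1 s0"
    and gpd: "admits_groupoid_structure C X X1 d0 d1 s0"
    and prod: "is_product C X X XX pr0 pr1"
    and r: "hom C r X1 XX" "cmp C pr0 r = d0" "cmp C pr1 r = d1"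
  shows "is_mono C r"
proof -
  obtain P p q c i where gs: "groupoid_structure C X X1 d0 d1 s0 P p q c i"
    using gpd unfolding admits_groupoid_structure_def by blast
  have hd0: "hom C d0 X1 X" and hd1: "hom C d1 X1 X" and hs0: "hom C s0 X X1"
    and d0s0: "d0 \<cdot> s0 = idt C X" and d1s0: "d1 \<cdot> s0 = idt C X"
    using G unfolding refl_graph_def by auto
  have pbP: "is_pullback C d0 d1 P p q" and hc: "hom C c P X1"
    and d0c: "d0 \<cdot> c = d0 \<cdot> q" and d1c: "d1 \<cdot> c = d1 \<cdot> p"
    and hi: "hom C i X1 X1" and d0i: "d0 \<cdot> i = d1" and d1i: "d1 \<cdot> i = d0"
    using gs unfolding groupoid_structure_def by auto
  have hp: "hom C p P X1" and hq: "hom C q P X1" and d0p: "d0 \<cdot> p = d1 \<cdot> q"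
    using pb_hom[OF pbP hd0 hd1] by auto
  have assocG: "\<And>T g h k u1 u2 u3 u4.
        hom C g T X1 \<Longrightarrow> hom C h T X1 \<Longrightarrow> hom C k T X1 \<Longrightarrow>
        d0 \<cdot> g = d1 \<cdot> h \<Longrightarrow> d0 \<cdot> h = d1 \<cdot> k \<Longrightarrow>
        hom C u1 T P \<Longrightarrow> p \<cdot> u1 = g \<Longrightarrow> q \<cdot> u1 = h \<Longrightarrow>
        hom C u2 T P \<Longrightarrow> p \<cdot> u2 = c \<cdot> u1 \<Longrightarrow> q \<cdot> u2 = k \<Longrightarrow>
        hom C u3 T P \<Longrightarrow> p \<cdot> u3 = h \<Longrightarrow> q \<cdot> u3 = k \<Longrightarrow>
        hom C u4 T P \<Longrightarrow> p \<cdot> u4 = g \<Longrightarrow> q \<cdot> u4 = c \<cdot> u3 \<Longrightarrow>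
        c \<cdot> u2 = c \<cdot> u4"
    using gs unfolding groupoid_structure_def by blast
  have lidG: "\<And>T g u. hom C g T X1 \<Longrightarrow> hom C u T P \<Longrightarrow>
        p \<cdot> u = s0 \<cdot> (d1 \<cdot> g) \<Longrightarrow> q \<cdot> u = g \<Longrightarrow> c \<cdot> u = g"
    using gs unfolding groupoid_structure_def by blast
  have ridG: "\<And>T g u. hom C g T X1 \<Longrightarrow> hom C u T P \<Longrightarrow>
        p \<cdot> u = g \<Longrightarrow> q \<cdot> u = s0 \<cdot> (d0 \<cdot> g) \<Longrightarrow> c \<cdot> u = g"
    using gs unfolding groupoid_structure_def by blast
  have inv1G: "\<And>T g u. hom C g T X1 \<Longrightarrow> hom C u T P \<Longrightarrow>
        p \<cdot> u = i \<cdot> g \<Longrightarrow> q \<cdot> u = g \<Longrightarrow> c \<cdot> u = s0 \<cdot> (d0 \<cdot> g)"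
    using gs unfolding groupoid_structure_def by blast
  have inv2G: "\<And>T g u. hom C g T X1 \<Longrightarrow> hom C u T P \<Longrightarrow>
        p \<cdot> u = g \<Longrightarrow> q \<cdot> u = i \<cdot> g \<Longrightarrow> c \<cdot> u = s0 \<cdot> (d1 \<cdot> g)"
    using gs unfolding groupoid_structure_def by blast
  have pairG: "\<exists>v. hom C v T P \<and> p \<cdot> v = g \<and> q \<cdot> v = h"
    if "hom C g T X1" "hom C h T X1" "d0 \<cdot> g = d1 \<cdot> h" for T g h
    using pb_ex[OF pbP that(1) hd0 that(2) hd1 that(3)] .
  have d0c': "d0 \<cdot> (c \<cdot> v) = d0 \<cdot> (q \<cdot> v)" if "hom C v T P" for T v
    using push[OF d0c that hc hd0] push[OF refl that hq hd0] by simp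
  have d1c': "d1 \<cdot> (c \<cdot> v) = d1 \<cdot> (p \<cdot> v)" if "hom C v T P" for T v
    using push[OF d1c that hc hd1] push[OF refl that hp hd1] by simp
  have d0i': "d0 \<cdot> (i \<cdot> g) = d1 \<cdot> g" if "hom C g T X1" for T g
    using push[OF d0i that hi hd0] .
  have d1i': "d1 \<cdot> (i \<cdot> g) = d0 \<cdot> g" if "hom C g T X1" for T g
    using push[OF d1i that hi hd1] .
  have s0X: "s0 \<cdot> idt C X = s0" using idr[OF hs0] .
  have is0: "i \<cdot> s0 = s0"
  proof -
    have his0: "hom C (i \<cdot> s0) X X1" using comp_hom[OF hs0 hi] .
    have "d0 \<cdot> (i \<cdot> s0) = d1 \<cdot> s0" using d0i'[OF hs0] .
    then obtain v where v: "hom C v X P" "p \<cdot> v = i \<cdot> s0" "q \<cdot> v = s0"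
      using pairG[OF his0 hs0] by blast
    have "c \<cdot> v = i \<cdot> s0" using ridG[OF his0 v(1) v(2)] v(3) d0i'[OF hs0] d1s0 s0X by simp
    moreover have "c \<cdot> v = s0" using inv1G[OF hs0 v(1) v(2) v(3)] d0s0 s0X by simp
    ultimately show ?thesis by simp
  qed
  have hpr0: "hom C pr0 XX X" and hpr1: "hom C pr1 XX X" using prod unfolding is_product_def by auto
  have idX: "hom C (idt C X) X X" using id_hom[OF X] .
  obtain dg where hdg: "hom C dg X XX" and pr0dg: "pr0 \<cdot> dg = idt C X" and pr1dg: "pr1 \<cdot> dg = idt C X"
    using prod idX unfolding is_product_def by metis
  obtain E e t where pbE: "is_pullback C r dg E e t"
    using fc r(1) hdg unfolding finitely_complete_def hom_def by metis
  have he: "hom C e E X1" and ht: "hom C t E X" and ret: "r \<cdot> e = dg \<cdot> t"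
    using pb_hom[OF pbE r(1) hdg] by auto
  have d0e: "d0 \<cdot> e = t"
  proof -
    have "d0 \<cdot> e = pr0 \<cdot> (r \<cdot> e)" using push[OF r(2) he r(1) hpr0] by simp
    also have "\<dots> = pr0 \<cdot> (dg \<cdot> t)" using ret by simp
    also have "\<dots> = t" using push[OF pr0dg ht hdg hpr0] idl[OF ht] by simp
    finally show ?thesis .
  qed
  have d1e: "d1 \<cdot> e = t"
  proof -
    have "d1 \<cdot> e = pr1 \<cdot> (r \<cdot> e)" using push[OF r(3) he r(1) hpr1] by simp
    also have "\<dots> = pr1 \<cdot> (dg \<cdot> t)" using ret by simp
    also have "\<dots> = t" using push[OF pr1dg ht hdg hpr1] idl[OF ht] by simp
    finally show ?thesis .
  qed
  have d0e': "d0 \<cdot> (e \<cdot> w) = t \<cdot> w" if "hom C w T E" for T w using push[OF d0e that he hd0] .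
  have d1e': "d1 \<cdot> (e \<cdot> w) = t \<cdot> w" if "hom C w T E" for T w using push[OF d1e that he hd1] .
  have Eu: "\<exists>w. hom C w T E \<and> e \<cdot> w = g \<and> t \<cdot> w = d0 \<cdot> g"
    if hg: "hom C g T X1" and lp: "d0 \<cdot> g = d1 \<cdot> g" for T g
  proof -
    have h0: "hom C (d0 \<cdot> g) T X" using comp_hom[OF hg hd0] .
    have "r \<cdot> g = dg \<cdot> (d0 \<cdot> g)"
    proof (rule prod_uniq[OF prod comp_hom[OF hg r(1)] comp_hom[OF h0 hdg]])
      show "pr0 \<cdot> (r \<cdot> g) = pr0 \<cdot> (dg \<cdot> (d0 \<cdot> g))"
        using push[OF r(2) hg r(1) hpr0] push[OF pr0dg h0 hdg hpr0] idl[OF h0] by simp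
      show "pr1 \<cdot> (r \<cdot> g) = pr1 \<cdot> (dg \<cdot> (d0 \<cdot> g))"
        using push[OF r(3) hg r(1) hpr1] push[OF pr1dg h0 hdg hpr1] idl[OF h0] lp by simp
    qed
    then show ?thesis using pb_ex[OF pbE hg r(1) h0 hdg] by blast
  qed
  have emono: "w = w'" if "hom C w T E" "hom C w' T E" "e \<cdot> w = e \<cdot> w'" for T w w'
  proof (rule pb_uniq[OF pbE r(1) hdg that(1,2) that(3)])
    show "t \<cdot> w = t \<cdot> w'" using d0e'[OF that(1)] d0e'[OF that(2)] that(3) by simp
  qed
  have d0s0': "d0 \<cdot> s0 = d1 \<cdot> s0" using d0s0 d1s0 by simp
  obtain u0 where hu0: "hom C u0 X E" and eu0: "e \<cdot> u0 = s0" and tu0: "t \<cdot> u0 = idt C X"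
    using Eu[OF hs0 d0s0'] d0s0 by metis
  have eu0': "e \<cdot> (u0 \<cdot> x) = s0 \<cdot> x" if "hom C x T X" for T x using push[OF eu0 that hu0 he] .
  have tu0': "t \<cdot> (u0 \<cdot> x) = x" if "hom C x T X" for T x
    using push[OF tu0 that hu0 ht] idl[OF that] by simp
  obtain PE pe qe where pbPE: "is_pullback C t t PE pe qe"
    using fc ht unfolding finitely_complete_def hom_def by metis
  have hpe: "hom C pe PE E" and hqe: "hom C qe PE E" and tpq: "t \<cdot> pe = t \<cdot> qe"
    using pb_hom[OF pbPE ht ht] by auto
  obtain uP where huP: "hom C uP PE P" and puP: "p \<cdot> uP = e \<cdot> pe" and quP: "q \<cdot> uP = e \<cdot> qe"
    using pairG[OF comp_hom[OF hpe he] comp_hom[OF hqe he]] d0e'[OF hpe] d1e'[OF hqe] tpq by metis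
  have hcuP: "hom C (c \<cdot> uP) PE X1" using comp_hom[OF huP hc] .
  have lpm: "d0 \<cdot> (c \<cdot> uP) = t \<cdot> qe" using d0c'[OF huP] quP d0e'[OF hqe] by simp
  have lpm1: "d1 \<cdot> (c \<cdot> uP) = t \<cdot> qe" using d1c'[OF huP] puP d1e'[OF hpe] tpq by simp
  obtain m where hm: "hom C m PE E" and em: "e \<cdot> m = c \<cdot> uP" and tm: "t \<cdot> m = t \<cdot> qe"
    using Eu[OF hcuP] lpm lpm1 by metis
  have mE: "e \<cdot> (m \<cdot> w) = c \<cdot> v"
    if hw: "hom C w T PE" and hv: "hom C v T P" and pv: "p \<cdot> v = e \<cdot> (pe \<cdot> w)" and qv: "q \<cdot> v = e \<cdot> (qe \<cdot> w)" for T w v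
  proof -
    have "uP \<cdot> w = v"
    proof (rule pb_uniq[OF pbP hd0 hd1 comp_hom[OF hw huP] hv])
      show "p \<cdot> (uP \<cdot> w) = p \<cdot> v" using push[OF puP hw huP hp] push[OF refl hw hpe he] pv by simp
      show "q \<cdot> (uP \<cdot> w) = q \<cdot> v" using push[OF quP hw huP hq] push[OF refl hw hqe he] qv by simp
    qed
    then show ?thesis using push[OF em hw hm he] push[OF refl hw huP hc] by simp
  qed
  have hie: "hom C (i \<cdot> e) E X1" using comp_hom[OF he hi] .
  have lpi: "d0 \<cdot> (i \<cdot> e) = d1 \<cdot> (i \<cdot> e)" using d0i'[OF he] d1i'[OF he] d0e d1e by simp
  obtain iE where hiE: "hom C iE E E" and eiE: "e \<cdot> iE = i \<cdot> e" and tiE: "t \<cdot> iE = d0 \<cdot> (i \<cdot> e)"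
    using Eu[OF hie lpi] by metis
  have tiE': "t \<cdot> iE = t" using tiE d0i'[OF he] d1e by simp
  have eiE': "e \<cdot> (iE \<cdot> a) = i \<cdot> (e \<cdot> a)" if "hom C a T E" for T a
    using push[OF eiE that hiE he] push[OF refl that he hi] by simp
  have grpE: "internal_group_in_Pt C X E t u0 PE pe qe m iE"
    unfolding internal_group_in_Pt_def
  proof (intro conjI allI impI)
    show "is_point C X E t u0" unfolding is_point_def using ht hu0 tu0 by auto
    show "is_pullback C t t PE pe qe" by (rule pbPE)
    show "hom C m PE E" by (rule hm)
    show "t \<cdot> m = t \<cdot> pe" using tm tpq by simp
    show "hom C iE E E" by (rule hiE)
    show "t \<cdot> iE = t" by (rule tiE')
    show "iE \<cdot> u0 = u0"
      using emono[OF comp_hom[OF hu0 hiE] hu0] eiE'[OF hu0] eu0 is0 by simp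
  next
    fix u assume hu: "hom C u X PE" and pu: "pe \<cdot> u = u0" and qu: "qe \<cdot> u = u0"
    obtain v where hv: "hom C v X P" and pv: "p \<cdot> v = s0" and qv: "q \<cdot> v = s0"
      using pairG[OF hs0 hs0 d0s0'] by blast
    have "c \<cdot> v = s0" using lidG[OF hs0 hv] pv qv d1s0 s0X by simp
    then have "e \<cdot> (m \<cdot> u) = e \<cdot> u0" using mE[OF hu hv] pv qv pu qu eu0 by simp
    then show "m \<cdot> u = u0" using emono[OF comp_hom[OF hu hm] hu0] by simp
  next
    fix T a b cc u1 u2 u3 u4
    assume ha: "hom C a T E" and hb: "hom C b T E" and hcc: "hom C cc T E"
      and tab: "t \<cdot> a = t \<cdot> b" and tbc: "t \<cdot> b = t \<cdot> cc"
      and h1: "hom C u1 T PE" and p1: "pe \<cdot> u1 = a" and q1: "qe \<cdot> u1 = b"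
      and h2: "hom C u2 T PE" and p2: "pe \<cdot> u2 = m \<cdot> u1" and q2: "qe \<cdot> u2 = cc"
      and h3: "hom C u3 T PE" and p3: "pe \<cdot> u3 = b" and q3: "qe \<cdot> u3 = cc"
      and h4: "hom C u4 T PE" and p4: "pe \<cdot> u4 = a" and q4: "qe \<cdot> u4 = m \<cdot> u3"
    have hg: "hom C (e \<cdot> a) T X1" and hh: "hom C (e \<cdot> b) T X1" and hk: "hom C (e \<cdot> cc) T X1"
      using comp_hom he ha hb hcc by blast+
    have c1: "d0 \<cdot> (e \<cdot> a) = d1 \<cdot> (e \<cdot> b)" using d0e'[OF ha] d1e'[OF hb] tab by simp
    have c2: "d0 \<cdot> (e \<cdot> b) = d1 \<cdot> (e \<cdot> cc)" using d0e'[OF hb] d1e'[OF hcc] tbc by simp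
    obtain v1 where v1: "hom C v1 T P" "p \<cdot> v1 = e \<cdot> a" "q \<cdot> v1 = e \<cdot> b" using pairG[OF hg hh c1] by blast
    obtain v3 where v3: "hom C v3 T P" "p \<cdot> v3 = e \<cdot> b" "q \<cdot> v3 = e \<cdot> cc" using pairG[OF hh hk c2] by blast
    have m1: "e \<cdot> (m \<cdot> u1) = c \<cdot> v1" using mE[OF h1 v1(1)] v1 p1 q1 by simp
    have m3: "e \<cdot> (m \<cdot> u3) = c \<cdot> v3" using mE[OF h3 v3(1)] v3 p3 q3 by simp
    have hcv1: "hom C (c \<cdot> v1) T X1" using comp_hom[OF v1(1) hc] .
    have hcv3: "hom C (c \<cdot> v3) T X1" using comp_hom[OF v3(1) hc] .
    have c3: "d0 \<cdot> (c \<cdot> v1) = d1 \<cdot> (e \<cdot> cc)" using d0c'[OF v1(1)] v1 c2 by simp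
    have c4: "d0 \<cdot> (e \<cdot> a) = d1 \<cdot> (c \<cdot> v3)" using d1c'[OF v3(1)] v3 c1 by simp
    obtain v2 where v2: "hom C v2 T P" "p \<cdot> v2 = c \<cdot> v1" "q \<cdot> v2 = e \<cdot> cc" using pairG[OF hcv1 hk c3] by blast
    obtain v4 where v4: "hom C v4 T P" "p \<cdot> v4 = e \<cdot> a" "q \<cdot> v4 = c \<cdot> v3" using pairG[OF hg hcv3 c4] by blast
    have m2: "e \<cdot> (m \<cdot> u2) = c \<cdot> v2" using mE[OF h2 v2(1)] v2 p2 q2 m1 by simp
    have m4: "e \<cdot> (m \<cdot> u4) = c \<cdot> v4" using mE[OF h4 v4(1)] v4 p4 q4 m3 by simp
    have "c \<cdot> v2 = c \<cdot> v4" using assocG[OF hg hh hk c1 c2 v1 v2 v3 v4] .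
    then show "m \<cdot> u2 = m \<cdot> u4" using emono[OF comp_hom[OF h2 hm] comp_hom[OF h4 hm]] m2 m4 by simp
  next
    fix T a u assume ha: "hom C a T E" and hu: "hom C u T PE" and pu: "pe \<cdot> u = u0 \<cdot> (t \<cdot> a)" and qu: "qe \<cdot> u = a"
    have hta: "hom C (t \<cdot> a) T X" using comp_hom[OF ha ht] .
    have hg: "hom C (e \<cdot> a) T X1" using comp_hom[OF ha he] .
    have cc: "d0 \<cdot> (s0 \<cdot> (t \<cdot> a)) = d1 \<cdot> (e \<cdot> a)"
      using push[OF d0s0 hta hs0 hd0] idl[OF hta] d1e'[OF ha] by simp
    obtain v where v: "hom C v T P" "p \<cdot> v = s0 \<cdot> (t \<cdot> a)" "q \<cdot> v = e \<cdot> a"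
      using pairG[OF comp_hom[OF hta hs0] hg cc] by blast
    have "c \<cdot> v = e \<cdot> a" using lidG[OF hg v(1)] v d1e'[OF ha] by simp
    then have "e \<cdot> (m \<cdot> u) = e \<cdot> a" using mE[OF hu v(1)] v pu qu eu0'[OF hta] by simp
    then show "m \<cdot> u = a" using emono[OF comp_hom[OF hu hm] ha] by simp
  next
    fix T a u assume ha: "hom C a T E" and hu: "hom C u T PE" and pu: "pe \<cdot> u = a" and qu: "qe \<cdot> u = u0 \<cdot> (t \<cdot> a)"
    have hta: "hom C (t \<cdot> a) T X" using comp_hom[OF ha ht] .
    have hg: "hom C (e \<cdot> a) T X1" using comp_hom[OF ha he] .
    have cc: "d0 \<cdot> (e \<cdot> a) = d1 \<cdot> (s0 \<cdot> (t \<cdot> a))"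
      using push[OF d1s0 hta hs0 hd1] idl[OF hta] d0e'[OF ha] by simp
    obtain v where v: "hom C v T P" "p \<cdot> v = e \<cdot> a" "q \<cdot> v = s0 \<cdot> (t \<cdot> a)"
      using pairG[OF hg comp_hom[OF hta hs0] cc] by blast
    have "c \<cdot> v = e \<cdot> a" using ridG[OF hg v(1)] v d0e'[OF ha] by simp
    then have "e \<cdot> (m \<cdot> u) = e \<cdot> a" using mE[OF hu v(1)] v pu qu eu0'[OF hta] by simp
    then show "m \<cdot> u = a" using emono[OF comp_hom[OF hu hm] ha] by simp
  next
    fix T a u assume ha: "hom C a T E" and hu: "hom C u T PE" and pu: "pe \<cdot> u = iE \<cdot> a" and qu: "qe \<cdot> u = a"
    have hta: "hom C (t \<cdot> a) T X" using comp_hom[OF ha ht] .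
    have hg: "hom C (e \<cdot> a) T X1" using comp_hom[OF ha he] .
    have cc: "d0 \<cdot> (i \<cdot> (e \<cdot> a)) = d1 \<cdot> (e \<cdot> a)" using d0i'[OF hg] .
    obtain v where v: "hom C v T P" "p \<cdot> v = i \<cdot> (e \<cdot> a)" "q \<cdot> v = e \<cdot> a"
      using pairG[OF comp_hom[OF hg hi] hg cc] by blast
    have "c \<cdot> v = s0 \<cdot> (t \<cdot> a)" using inv1G[OF hg v(1)] v d0e'[OF ha] by simp
    then have "e \<cdot> (m \<cdot> u) = e \<cdot> (u0 \<cdot> (t \<cdot> a))" using mE[OF hu v(1)] v pu qu eu0'[OF hta] eiE'[OF ha] by simp
    then show "m \<cdot> u = u0 \<cdot> (t \<cdot> a)" using emono[OF comp_hom[OF hu hm] comp_hom[OF hta hu0]] by simp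
  next
    fix T a u assume ha: "hom C a T E" and hu: "hom C u T PE" and pu: "pe \<cdot> u = a" and qu: "qe \<cdot> u = iE \<cdot> a"
    have hta: "hom C (t \<cdot> a) T X" using comp_hom[OF ha ht] .
    have hg: "hom C (e \<cdot> a) T X1" using comp_hom[OF ha he] .
    have cc: "d0 \<cdot> (e \<cdot> a) = d1 \<cdot> (i \<cdot> (e \<cdot> a))" using d1i'[OF hg] by simp
    obtain v where v: "hom C v T P" "p \<cdot> v = e \<cdot> a" "q \<cdot> v = i \<cdot> (e \<cdot> a)"
      using pairG[OF hg comp_hom[OF hg hi] cc] by blast
    have "c \<cdot> v = s0 \<cdot> (t \<cdot> a)" using inv2G[OF hg v(1)] v d1e'[OF ha] by simp
    then have "e \<cdot> (m \<cdot> u) = e \<cdot> (u0 \<cdot> (t \<cdot> a))" using mE[OF hu v(1)] v pu qu eu0'[OF hta] eiE'[OF ha] by simp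
    then show "m \<cdot> u = u0 \<cdot> (t \<cdot> a)" using emono[OF comp_hom[OF hu hm] comp_hom[OF hta hu0]] by simp
  qed
  have iso: "is_iso C t" using grp[OF X grpE] .
  obtain gi where hgi: "hom C gi X E" and git: "gi \<cdot> t = idt C E"
    using iso ht unfolding is_iso_def hom_def by auto
  have git': "gi \<cdot> (t \<cdot> w) = w" if "hom C w T E" for T w
    using push[OF git that ht hgi] idl[OF that] by simp
  have allu0: "w = u0 \<cdot> (t \<cdot> w)" if hw: "hom C w T E" for T w
  proof -
    have htw: "hom C (t \<cdot> w) T X" using comp_hom[OF hw ht] .
    have "u0 \<cdot> (t \<cdot> w) = gi \<cdot> (t \<cdot> (u0 \<cdot> (t \<cdot> w)))" using git'[OF comp_hom[OF htw hu0]] by simp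
    also have "\<dots> = w" using tu0'[OF htw] git'[OF hw] by simp
    finally show ?thesis by simp
  qed
  have loop: "l = s0 \<cdot> (d0 \<cdot> l)" if hl: "hom C l T X1" and lp: "d0 \<cdot> l = d1 \<cdot> l" for T l
  proof -
    obtain w where hw: "hom C w T E" and ew: "e \<cdot> w = l" and tw: "t \<cdot> w = d0 \<cdot> l"
      using Eu[OF hl lp] by blast
    have "l = e \<cdot> (u0 \<cdot> (t \<cdot> w))" using allu0[OF hw] ew by simp
    also have "\<dots> = s0 \<cdot> (t \<cdot> w)" using eu0'[OF comp_hom[OF hw ht]] .
    finally show ?thesis using tw by simp
  qed
  show ?thesis unfolding is_mono_def
  proof (intro conjI allI impI)
    show "r \<in> Arr C" using r(1) unfolding hom_def by simp
    fix T a b assume ha0: "hom C a T (dom C r)" and hb0: "hom C b T (dom C r)" and rab: "r \<cdot> a = r \<cdot> b"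
    have ha: "hom C a T X1" and hb: "hom C b T X1" using ha0 hb0 r(1) unfolding hom_def by auto
    have e0: "d0 \<cdot> a = d0 \<cdot> b" using push[OF r(2) ha r(1) hpr0] push[OF r(2) hb r(1) hpr0] rab by simp
    have e1: "d1 \<cdot> a = d1 \<cdot> b" using push[OF r(3) ha r(1) hpr1] push[OF r(3) hb r(1) hpr1] rab by simp
    have hib: "hom C (i \<cdot> b) T X1" using comp_hom[OF hb hi] .
    have c1: "d0 \<cdot> a = d1 \<cdot> (i \<cdot> b)" using e0 d1i'[OF hb] by simp
    have c2: "d0 \<cdot> (i \<cdot> b) = d1 \<cdot> b" using d0i'[OF hb] .
    obtain v1 where v1: "hom C v1 T P" "p \<cdot> v1 = a" "q \<cdot> v1 = i \<cdot> b" using pairG[OF ha hib c1] by blast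
    obtain v3 where v3: "hom C v3 T P" "p \<cdot> v3 = i \<cdot> b" "q \<cdot> v3 = b" using pairG[OF hib hb c2] by blast
    have hcv1: "hom C (c \<cdot> v1) T X1" using comp_hom[OF v1(1) hc] .
    have hcv3: "hom C (c \<cdot> v3) T X1" using comp_hom[OF v3(1) hc] .
    have lc1: "d0 \<cdot> (c \<cdot> v1) = d1 \<cdot> b" using d0c'[OF v1(1)] v1 c2 by simp
    have lc1': "d1 \<cdot> (c \<cdot> v1) = d1 \<cdot> b" using d1c'[OF v1(1)] v1 e1 by simp
    have cv1: "c \<cdot> v1 = s0 \<cdot> (d1 \<cdot> b)" using loop[OF hcv1] lc1 lc1' by simp
    have c3: "d0 \<cdot> (c \<cdot> v1) = d1 \<cdot> b" by (rule lc1)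
    have c4: "d0 \<cdot> a = d1 \<cdot> (c \<cdot> v3)" using d1c'[OF v3(1)] v3 c1 by simp
    obtain v2 where v2: "hom C v2 T P" "p \<cdot> v2 = c \<cdot> v1" "q \<cdot> v2 = b" using pairG[OF hcv1 hb c3] by blast
    obtain v4 where v4: "hom C v4 T P" "p \<cdot> v4 = a" "q \<cdot> v4 = c \<cdot> v3" using pairG[OF ha hcv3 c4] by blast
    have eq: "c \<cdot> v2 = c \<cdot> v4" using assocG[OF ha hib hb c1 c2 v1 v2 v3 v4] .
    have "c \<cdot> v2 = b" using lidG[OF hb v2(1)] v2 cv1 by simp
    moreover have "c \<cdot> v3 = s0 \<cdot> (d0 \<cdot> b)" using inv1G[OF hb v3(1)] v3 by simp
    then have "c \<cdot> v4 = a" using ridG[OF ha v4(1)] v4 e0 by simp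
    ultimately show "a = b" using eq by simp
  qed
qed

end
theorem mainTheorem13:
  fixes C :: "('o, 'm) cat"
  assumes fc: "finitely_complete C"
    and grp: "\<And>X A f s P p q m i. X \<in> Obj C \<Longrightarrow>
                internal_group_in_Pt C X A f s P p q m i \<Longrightarrow> is_iso C f"
    and X: "X \<in> Obj C"
    and G: "refl_graph C X X1 d0 d1 s0"
    and gpd: "admits_groupoid_structure C X X1 d0 d1 s0"
    and prod: "is_product C X X XX pr0 pr1"
    and r: "hom C r X1 XX" "cmp C pr0 r = d0" "cmp C pr1 r = d1"
  shows "is_mono C r"
proof -
  have "category C" using fc unfolding finitely_complete_def by simp
  then interpret cctx C by (unfold_locales)
  show ?thesis using main[OF fc grp X G gpd prod r] .
qed

end
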